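(* Every strip $S\subset\mathbb{R}^2$ is foliated homeomorphic to a model strip; that is, there exist a model strip $S'$ and a homeomorphism $h:S\to S'$ mapping each leaf of the canonical foliation of $S$ onto a leaf of the canonical foliation of $S'$.
   Context: A subset $S\subset\mathbb{R}^2$ is a strip if for some real numbers $u<v$ one has $\mathbb{R}\times(u,v)\subset S\subset\mathbb{R}\times[u,v]$ and $S$ is open in the topology of $\mathbb{R}\times[u,v]$. Put $\partial_-S=S\cap(\mathbb{R}\times\{u\})$, $\partial_+S=S\cap(\mathbb{R}\times\{v\})$, $\partial S=\partial_-S\cup\partial_+S$; $\partial S$ is a disjoint union of at most countably many open (possibly unbounded) horizontal intervals, called boundary intervals. A strip is a model strip if in addition every connected component of $\partial S$ is a bounded interval and the closures in $\mathbb{R}\times[u,v]$ of distinct boundary intervals are mutually disjoint. The canonical foliation of a strip $S$ has as leaves the horizontal lines $\mathbb{R}\times\{t\}$, $t\in(u,v)$, and the boundary intervals of $\partial S$. A homeomorphism between foliated surfaces is foliated if it maps each leaf onto a leaf. *)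

theory Defs
  imports "HOL-Analysis.Analysis"
begin

text \<open>Points of the plane are pairs (x, y) :: real \<times> real (Euclidean product topology).
  A strip is described together with its (uniquely determined) bounds u < v.\<close>

definition is_strip :: "real \<Rightarrow> real \<Rightarrow> (real \<times> real) set \<Rightarrow> bool" where
  "is_strip u v S \<longleftrightarrow> u < v \<and> UNIV \<times> {u<..<v} \<subseteq> S \<and> S \<subseteq> UNIV \<times> {u..v}
     \<and> openin (top_of_set (UNIV \<times> {u..v})) S"

definition lower_boundary :: "real \<Rightarrow> (real \<times> real) set \<Rightarrow> (real \<times> real) set" where
  "lower_boundary u S = S \<inter> (UNIV \<times> {u})"

definition upper_boundary :: "real \<Rightarrow> (real \<times> real) set \<Rightarrow> (real \<times> real) set" where
  "upper_boundary v S = S \<inter> (UNIV \<times> {v})"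

definition strip_boundary :: "real \<Rightarrow> real \<Rightarrow> (real \<times> real) set \<Rightarrow> (real \<times> real) set" where
  "strip_boundary u v S = lower_boundary u S \<union> upper_boundary v S"

definition boundary_intervals :: "real \<Rightarrow> real \<Rightarrow> (real \<times> real) set \<Rightarrow> (real \<times> real) set set" where
  "boundary_intervals u v S = components (strip_boundary u v S)"

definition is_model_strip :: "real \<Rightarrow> real \<Rightarrow> (real \<times> real) set \<Rightarrow> bool" where
  "is_model_strip u v S \<longleftrightarrow> is_strip u v S
     \<and> (\<forall>I \<in> boundary_intervals u v S. bounded I)
     \<and> (\<forall>I \<in> boundary_intervals u v S. \<forall>J \<in> boundary_intervals u v S.
          I \<noteq> J \<longrightarrow> closure I \<inter> closure J = {})"

definition canonical_leaves :: "real \<Rightarrow> real \<Rightarrow> (real \<times> real) set \<Rightarrow> (real \<times> real) set set" where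
  "canonical_leaves u v S = {UNIV \<times> {t} | t. u < t \<and> t < v} \<union> boundary_intervals u v S"

definition foliated_homeomorphism ::
  "(real \<times> real) set set \<Rightarrow> (real \<times> real) set set \<Rightarrow> (real \<times> real) set \<Rightarrow> (real \<times> real) set
    \<Rightarrow> ((real \<times> real) \<Rightarrow> (real \<times> real)) \<Rightarrow> bool" where
  "foliated_homeomorphism F F' S S' h \<longleftrightarrow>
     (\<exists>g. homeomorphism S S' h g) \<and> (\<forall>L \<in> F. h ` L \<in> F')"

end

theory Submission
  imports Defs
begin


definition psi :: "real \<Rightarrow> real" where "psi x = x / (1 + \<bar>x\<bar>)"

lemma psi_bound: "\<bar>psi x\<bar> < 1"
  unfolding psi_def by (auto simp: abs_if divide_simps)

lemma psi_strict: "x < y \<Longrightarrow> psi x < psi y"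
proof -
  assume xy: "x < y"
  have "x * (1 + \<bar>y\<bar>) < y * (1 + \<bar>x\<bar>)"
  proof (cases "0 \<le> x")
    case True then show ?thesis using xy by (simp add: algebra_simps)
  next
    case False
    then show ?thesis using xy mult_nonpos_nonneg[of x y] by (cases "0 \<le> y") (auto simp: algebra_simps)
  qed
  then show ?thesis unfolding psi_def by (simp add: divide_simps add_pos_nonneg)
qed

lemma psi_cont: "continuous_on X psi"
  unfolding psi_def by (intro continuous_intros) (auto simp: abs_if split: if_splits)


definition Mf :: "real set \<Rightarrow> real \<Rightarrow> real" where
  "Mf A x = Sup (insert (-1) (psi ` {q. q \<notin> A \<and> q < x}))"

lemma Mf_bdd: "bdd_above (insert (-1) (psi ` {q. q \<notin> A \<and> q < x}))"
  using psi_bound by (auto intro!: bdd_aboveI[of _ 1] simp: abs_less_iff less_imp_le)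

lemma Mf_ge1: "-1 \<le> Mf A x"
  unfolding Mf_def by (rule cSup_upper[OF _ Mf_bdd]) auto

lemma Mf_le1: "Mf A x \<le> 1"
  unfolding Mf_def using psi_bound by (intro cSup_least) (auto simp: abs_less_iff less_imp_le)

lemma Mf_ge: "q \<notin> A \<Longrightarrow> q < x \<Longrightarrow> psi q \<le> Mf A x"
  unfolding Mf_def by (rule cSup_upper[OF _ Mf_bdd]) auto

lemma psi_img_bdd: "bdd_above (psi ` X)"
  using psi_bound by (auto intro!: bdd_aboveI[of _ 1] simp: abs_less_iff less_imp_le)

lemma Mf_mono: "x \<le> y \<Longrightarrow> Mf A x \<le> Mf A y"
  unfolding Mf_def by (rule cSup_subset_mono) (auto intro: psi_img_bdd)

lemma Mf_mono': "mono (Mf A)"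
  by (simp add: Mf_mono monoI)

lemma Mf_const: "{x..y} \<subseteq> A \<Longrightarrow> x \<le> y \<Longrightarrow> Mf A x = Mf A y"
proof -
  assume "{x..y} \<subseteq> A" "x \<le> y"
  then have "{q. q \<notin> A \<and> q < x} = {q. q \<notin> A \<and> q < y}"
    by (auto simp: subset_iff not_less)
  then show ?thesis unfolding Mf_def by simp
qed

lemma Mf_lt: "open A \<Longrightarrow> x \<in> A \<Longrightarrow> Mf A x < psi x"
proof -
  assume "open A" "x \<in> A"
  then obtain d where d: "d > 0" "ball x d \<subseteq> A" by (meson openE)
  have "Mf A x \<le> psi (x - d/2)"
    unfolding Mf_def
  proof (rule cSup_least)
    fix z assume "z \<in> insert (-1) (psi ` {q. q \<notin> A \<and> q < x})"
    then consider "z = -1" | q where "z = psi q" "q \<notin> A" "q < x" by auto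
    then show "z \<le> psi (x - d/2)"
    proof cases
      case 1 then show ?thesis using psi_bound[of "x - d/2"] by auto
    next
      case 2
      have "q \<notin> ball x d" using 2 d by auto
      then have "q < x - d/2" using 2 by (auto simp: dist_real_def)
      then show ?thesis using 2 psi_strict by (auto intro: less_imp_le)
    qed
  qed auto
  also have "\<dots> < psi x" using d psi_strict by auto
  finally show ?thesis .
qed

definition Reg :: "(real \<Rightarrow> real) \<Rightarrow> real \<Rightarrow> real \<Rightarrow> real" where
  "Reg f lam x = Sup (range (\<lambda>y. f y - lam * \<bar>x - y\<bar>))"

locale bnd = fixes f :: "real \<Rightarrow> real"
  assumes fb: "\<And>y. -1 \<le> f y" "\<And>y. f y \<le> 1"
begin

lemma Reg_bdd: "lam \<ge> 0 \<Longrightarrow> bdd_above (range (\<lambda>y. f y - lam * \<bar>x - y\<bar>))"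
proof (rule bdd_aboveI[of _ 1])
  fix z assume "lam \<ge> 0" "z \<in> range (\<lambda>y. f y - lam * \<bar>x - y\<bar>)"
  then obtain y where "z = f y - lam * \<bar>x - y\<bar>" by auto
  then show "z \<le> 1" using fb(2)[of y] mult_nonneg_nonneg[of lam "\<bar>x-y\<bar>"] \<open>lam \<ge> 0\<close> by linarith
qed

lemma Reg_upper: "lam \<ge> 0 \<Longrightarrow> f y - lam * \<bar>x - y\<bar> \<le> Reg f lam x"
  unfolding Reg_def by (rule cSup_upper[OF _ Reg_bdd]) auto

lemma Reg_ge: "lam \<ge> 0 \<Longrightarrow> f x \<le> Reg f lam x"
  using Reg_upper[of lam x x] by simp

lemma Reg_least: "(\<And>y. f y - lam * \<bar>x - y\<bar> \<le> c) \<Longrightarrow> Reg f lam x \<le> c"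
  unfolding Reg_def by (rule cSup_least) auto

lemma Reg_le1: "lam \<ge> 0 \<Longrightarrow> Reg f lam x \<le> 1"
proof (rule Reg_least)
  fix y assume "lam \<ge> 0"
  then show "f y - lam * \<bar>x - y\<bar> \<le> 1" using fb(2)[of y] mult_nonneg_nonneg[of lam "\<bar>x-y\<bar>"] by linarith
qed

lemma Reg_ge1: "lam \<ge> 0 \<Longrightarrow> -1 \<le> Reg f lam x"
  using Reg_ge[of lam x] fb(1)[of x] by linarith

lemma Reg_mono:
  assumes "mono f" "lam \<ge> 0" "x \<le> x'"
  shows "Reg f lam x \<le> Reg f lam x'"
proof (rule Reg_least)
  fix y
  show "f y - lam * \<bar>x - y\<bar> \<le> Reg f lam x'"
  proof (cases "x' \<le> y")
    case True
    then have "f y - lam * \<bar>x - y\<bar> \<le> f y - lam * \<bar>x' - y\<bar>"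
      using assms by (intro diff_left_mono mult_left_mono) auto
    then show ?thesis using Reg_upper[of lam y x'] assms by linarith
  next
    case False
    then have "f y \<le> f x'" using assms(1) by (simp add: monoD)
    moreover have "lam * \<bar>x - y\<bar> \<ge> 0" using assms by simp
    ultimately show ?thesis using Reg_ge[of lam x'] assms by linarith
  qed
qed

lemma Reg_const:
  assumes "\<And>y. \<bar>y - x0\<bar> < 2 * e \<Longrightarrow> f y = c" "e > 0" "lam \<ge> 2 / e" "\<bar>x - x0\<bar> < e"
  shows "Reg f lam x = c"
proof (rule antisym)
  have lam0: "lam > 0" using assms by (smt (verit) divide_pos_pos)
  show "Reg f lam x \<le> c"
  proof (rule Reg_least)
    fix y
    show "f y - lam * \<bar>x - y\<bar> \<le> c"
    proof (cases "\<bar>y - x0\<bar> < 2 * e")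
      case True
      then show ?thesis using assms lam0 by (simp add: mult_nonneg_nonneg)
    next
      case False
      then have "\<bar>x - y\<bar> \<ge> e" using assms by linarith
      then have "lam * \<bar>x - y\<bar> \<ge> (2 / e) * e" using assms lam0
        by (intro mult_mono) auto
      then have "lam * \<bar>x - y\<bar> \<ge> 2" using assms by simp
      moreover have "c = f x0" using assms by simp
      ultimately show ?thesis using fb[of y] fb[of x0] by linarith
    qed
  qed
  show "c \<le> Reg f lam x" using Reg_ge[of lam x] assms lam0 by simp
qed

lemma Reg_lip:
  assumes "lam > 0" "lam' > 0"
  shows "Reg f lam x \<le> Reg f lam' x' + lam * \<bar>x - x'\<bar> + 2 * \<bar>lam - lam'\<bar> / lam"
proof (rule Reg_least)
  fix y
  have tri: "lam * \<bar>x' - y\<bar> \<le> lam * \<bar>x - y\<bar> + lam * \<bar>x - x'\<bar>"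
    using assms by (simp add: distrib_left[symmetric] mult_left_mono)
  have R0: "f x' \<le> Reg f lam' x'" using Reg_ge assms by simp
  have nn: "0 \<le> 2 * \<bar>lam - lam'\<bar> / lam" using assms by simp
  show "f y - lam * \<bar>x - y\<bar> \<le> Reg f lam' x' + lam * \<bar>x - x'\<bar> + 2 * \<bar>lam - lam'\<bar> / lam"
  proof (cases "lam * \<bar>x' - y\<bar> \<ge> 2")
    case True
    then show ?thesis using tri R0 nn fb[of y] fb[of x'] by linarith
  next
    case False
    then have yb: "\<bar>x' - y\<bar> \<le> 2 / lam" using assms by (simp add: field_simps)
    have "(lam' - lam) * \<bar>x' - y\<bar> \<le> \<bar>lam - lam'\<bar> * (2 / lam)"
      by (smt (verit, best) abs_ge_zero mult_mono mult_right_mono yb)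
    then have "f y - lam * \<bar>x' - y\<bar> \<le> (f y - lam' * \<bar>x' - y\<bar>) + 2 * \<bar>lam - lam'\<bar> / lam"
      by (simp add: algebra_simps)
    moreover have "f y - lam' * \<bar>x' - y\<bar> \<le> Reg f lam' x'" using Reg_upper assms by simp
    ultimately show ?thesis using tri by linarith
  qed
qed

lemma Reg_cont: "continuous_on (UNIV \<times> {0<..}) (\<lambda>p. Reg f (snd p) (fst p))"
  unfolding continuous_on_iff
proof (intro ballI allI impI)
  fix p0 :: "real \<times> real" and e :: real
  assume p0: "p0 \<in> UNIV \<times> {0<..}" and e: "0 < e"
  obtain x0 l0 where pe: "p0 = (x0, l0)" by (cases p0)
  have l0: "l0 > 0" using p0 pe by auto
  define K where "K = 2 * l0 + 4 / l0 + 1"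
  have K: "K > 0" using l0 by (simp add: K_def add_pos_pos)
  define d where "d = min (l0/2) (e/K)"
  have d: "d > 0" using l0 e K by (simp add: d_def)
  show "\<exists>d>0. \<forall>p'\<in>UNIV \<times> {0<..}. dist p' p0 < d \<longrightarrow> dist (Reg f (snd p') (fst p')) (Reg f (snd p0) (fst p0)) < e"
  proof (intro exI[of _ d] conjI ballI impI d)
    fix p assume p: "p \<in> UNIV \<times> {0<..}" "dist p p0 < d"
    obtain x l where pp: "p = (x, l)" by (cases p)
    have dx: "\<bar>x - x0\<bar> < d" using dist_fst_le[of p p0] p pp pe by (auto simp: dist_real_def)
    have dl: "\<bar>l - l0\<bar> < d" using dist_snd_le[of p p0] p pp pe by (auto simp: dist_real_def)
    have lpos: "l > l0 / 2" and lup: "l < 3 * l0 / 2" proof -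
      have "\<bar>l - l0\<bar> < l0 / 2" using dl d_def by auto
      then show "l > l0 / 2" "l < 3 * l0 / 2" by arith+
    qed
    have l: "l > 0" using lpos l0 by linarith
    have inv: "2 / l \<le> 4 / l0" using lpos l0 by (simp add: field_simps)
    have U: "Reg f l x \<le> Reg f l0 x0 + l * \<bar>x - x0\<bar> + 2 * \<bar>l - l0\<bar> / l"
      using Reg_lip[OF l l0] .
    have U1: "l * \<bar>x - x0\<bar> \<le> (3 * l0 / 2) * d" using lup dx l by (intro mult_mono) auto
    have U2: "2 * \<bar>l - l0\<bar> / l \<le> (4 / l0) * d"
    proof -
      have "2 * \<bar>l - l0\<bar> / l = (2 / l) * \<bar>l - l0\<bar>" by simp
      also have "\<dots> \<le> (4 / l0) * d" using inv dl l0 by (intro mult_mono) auto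
      finally show ?thesis .
    qed
    have L: "Reg f l0 x0 \<le> Reg f l x + l0 * \<bar>x0 - x\<bar> + 2 * \<bar>l0 - l\<bar> / l0"
      using Reg_lip[OF l0 l] .
    have L1: "l0 * \<bar>x0 - x\<bar> \<le> l0 * d" using dx l0 by (intro mult_left_mono) auto
    have L2: "2 * \<bar>l0 - l\<bar> / l0 \<le> (2 / l0) * d" using dl l0 by (simp add: field_simps)
    have Kd: "K * d \<le> e" using K e by (simp add: d_def field_simps min_def)
    have "(3 * l0 / 2) * d + (4 / l0) * d < K * d" "l0 * d + (2 / l0) * d < K * d"
    proof -
      have e1: "K * d = 2 * l0 * d + (4 / l0) * d + d" unfolding K_def by (simp add: algebra_simps)
      have "0 \<le> l0 * d" "0 \<le> (2/l0) * d" using d l0 by auto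
      then show "(3 * l0 / 2) * d + (4 / l0) * d < K * d" "l0 * d + (2 / l0) * d < K * d"
        using e1 d by (simp_all add: field_simps)
    qed
    then show "dist (Reg f (snd p) (fst p)) (Reg f (snd p0) (fst p0)) < e"
      using U U1 U2 L L1 L2 Kd pp pe by (simp add: dist_real_def abs_less_iff)
  qed
qed

end

lemma dist_pair_lt: "\<bar>a - c\<bar> < e/2 \<Longrightarrow> \<bar>b - d\<bar> < e/2 \<Longrightarrow> dist ((a::real), (b::real)) (c, d) < e"
  unfolding dist_Pair_Pair dist_real_def by (rule sqrt_sum_squares_half_less) auto



lemma bnd_Mf: "bnd (Mf X)"
  by unfold_locales (auto simp: Mf_ge1 Mf_le1)

locale strip_setup = fixes u v :: real and A B :: "real set"
  assumes uv: "u < v" and oA: "open A" and oB: "open B"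
begin

definition "al t = (v - t) / (v - u)"
definition "be t = (t - u) / (v - u)"
definition "w t = (t - u) * (v - t)"
definition "PA t x = (if t \<le> u then Mf A x else Reg (Mf A) (1 / (t - u)) x)"
definition "PB t x = (if v \<le> t then Mf B x else Reg (Mf B) (1 / (v - t)) x)"
definition "H t x = psi x + al t * PA t x + be t * PB t x + w t * x"
definition "hh p = (H (snd p) (fst p), snd p)"
definition "SS = UNIV \<times> {u<..<v} \<union> A \<times> {u} \<union> B \<times> {v}"

lemma PA_bnd: "-1 \<le> PA t x" "PA t x \<le> 1"
  unfolding PA_def using bnd.Reg_ge1[OF bnd_Mf] bnd.Reg_le1[OF bnd_Mf] Mf_ge1 Mf_le1
  by auto

lemma PB_bnd: "-1 \<le> PB t x" "PB t x \<le> 1"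
  unfolding PB_def using bnd.Reg_ge1[OF bnd_Mf] bnd.Reg_le1[OF bnd_Mf] Mf_ge1 Mf_le1
  by auto

lemma PA_mono: "x \<le> x' \<Longrightarrow> PA t x \<le> PA t x'"
  unfolding PA_def using bnd.Reg_mono[OF bnd_Mf Mf_mono'] Mf_mono by auto

lemma PB_mono: "x \<le> x' \<Longrightarrow> PB t x \<le> PB t x'"
  unfolding PB_def using bnd.Reg_mono[OF bnd_Mf Mf_mono'] Mf_mono by auto

lemma coef: assumes "t \<in> {u..v}"
  shows "0 \<le> al t" "0 \<le> be t" "al t + be t = 1" "0 \<le> w t"
proof -
  show "0 \<le> al t" "0 \<le> be t" "0 \<le> w t" using assms uv by (auto simp: al_def be_def w_def)
  have "al t + be t = ((v - t) + (t - u)) / (v - u)" unfolding al_def be_def by (rule add_divide_distrib[symmetric])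
  then show "al t + be t = 1" using uv by simp
qed

lemma al_u: "al u = 1" and be_u: "be u = 0" and w_u: "w u = 0"
  and al_v: "al v = 0" and be_v: "be v = 1" and w_v: "w v = 0"
  using uv by (auto simp: al_def be_def w_def)

lemma H_u: "H u x = psi x + Mf A x"
  by (simp add: H_def al_u be_u w_u PA_def)

lemma H_v: "H v x = psi x + Mf B x"
  by (simp add: H_def al_v be_v w_v PB_def)

lemma H_strict: assumes "t \<in> {u..v}" "x < x'" shows "H t x < H t x'"
proof -
  note c = coef[OF assms(1)]
  have "al t * PA t x \<le> al t * PA t x'" using c PA_mono assms by (intro mult_left_mono) auto
  moreover have "be t * PB t x \<le> be t * PB t x'" using c PB_mono assms by (intro mult_left_mono) auto
  moreover have "w t * x \<le> w t * x'" using c assms by (intro mult_left_mono) auto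
  moreover have "psi x < psi x'" using psi_strict assms by auto
  ultimately show ?thesis unfolding H_def by linarith
qed

lemma H_bound: assumes "t \<in> {u..v}" shows "\<bar>H t x - w t * x\<bar> \<le> 3"
proof -
  note c = coef[OF assms(1)]
  have "\<bar>al t * PA t x\<bar> \<le> al t" using c PA_bnd[of t x]
    by (simp add: abs_mult mult_left_le)
  moreover have "\<bar>be t * PB t x\<bar> \<le> be t" using c PB_bnd[of t x]
    by (simp add: abs_mult mult_left_le)
  moreover have "\<bar>psi x\<bar> \<le> 1" using psi_bound[of x] by simp
  ultimately show ?thesis using c unfolding H_def by linarith
qed

lemma H_cont_int: "continuous_on (UNIV \<times> {u<..<v}) (\<lambda>p. H (snd p) (fst p))"
proof -
  have cA: "continuous_on (UNIV \<times> {u<..<v}) (\<lambda>p. Reg (Mf A) (1 / (snd p - u)) (fst p))"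
  proof -
    have "continuous_on (UNIV \<times> {u<..<v}) (\<lambda>p. (\<lambda>q. Reg (Mf A) (snd q) (fst q)) (fst p, 1 / (snd p - u)))"
      by (rule continuous_on_compose2[OF bnd.Reg_cont[OF bnd_Mf]])
         (auto intro!: continuous_intros)
    then show ?thesis by simp
  qed
  have cB: "continuous_on (UNIV \<times> {u<..<v}) (\<lambda>p. Reg (Mf B) (1 / (v - snd p)) (fst p))"
  proof -
    have "continuous_on (UNIV \<times> {u<..<v}) (\<lambda>p. (\<lambda>q. Reg (Mf B) (snd q) (fst q)) (fst p, 1 / (v - snd p)))"
      by (rule continuous_on_compose2[OF bnd.Reg_cont[OF bnd_Mf]])
         (auto intro!: continuous_intros)
    then show ?thesis by simp
  qed
  have cp: "continuous_on (UNIV \<times> {u<..<v}) (\<lambda>p. psi (fst p))"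
    by (rule continuous_on_compose2[OF psi_cont]) (auto intro!: continuous_intros)
  have "continuous_on (UNIV \<times> {u<..<v}) (\<lambda>p. psi (fst p) + al (snd p) * Reg (Mf A) (1 / (snd p - u)) (fst p)
      + be (snd p) * Reg (Mf B) (1 / (v - snd p)) (fst p) + w (snd p) * fst p)"
    unfolding al_def be_def w_def using uv
    by (intro continuous_intros cA cB cp) auto
  then show ?thesis
    by (rule continuous_on_eq) (auto simp: H_def PA_def PB_def)
qed

lemma H_cont_line: assumes "u < t" "t < v" shows "continuous_on X (H t)"
proof -
  have "continuous_on X (\<lambda>x. (\<lambda>p. H (snd p) (fst p)) (x, t))"
    by (rule continuous_on_compose2[OF H_cont_int]) (use assms in \<open>auto intro!: continuous_intros\<close>)
  then show ?thesis by simp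
qed

lemma H_surj: assumes "u < t" "t < v" shows "\<exists>x. H t x = y"
proof -
  have tt: "t \<in> {u..v}" using assms by auto
  have wp: "w t > 0" using assms by (simp add: w_def)
  define a where "a = (y - 3) / w t"
  define b where "b = (y + 3) / w t"
  have "w t * a = y - 3" "w t * b = y + 3" using wp by (auto simp: a_def b_def)
  then have "H t a \<le> y" "y \<le> H t b" using H_bound[OF tt, of a] H_bound[OF tt, of b] by (auto simp: abs_le_iff)
  moreover have "a \<le> b" using wp by (simp add: a_def b_def divide_right_mono)
  ultimately show ?thesis using IVT'[of "H t" a y b] H_cont_line[OF assms] by blast
qed

end


lemma loc_const:
  assumes "open D" "x0 \<in> D"
  obtains eta where "eta > 0" "\<And>y. \<bar>y - x0\<bar> < 2 * eta \<Longrightarrow> Mf D y = Mf D x0 \<and> y \<in> D"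
proof -
  obtain e where e: "e > 0" "ball x0 e \<subseteq> D" using assms by (meson openE)
  have "Mf D y = Mf D x0 \<and> y \<in> D" if y: "\<bar>y - x0\<bar> < 2 * (e/2)" for y
  proof -
    have sub: "{min y x0..max y x0} \<subseteq> D"
    proof
      fix z assume z: "z \<in> {min y x0..max y x0}"
      have "\<bar>z - x0\<bar> \<le> \<bar>y - x0\<bar>"
      proof (cases "y \<le> x0")
        case True then show ?thesis using z by (simp add: min_def max_def)
      next
        case False then show ?thesis using z by (simp add: min_def max_def)
      qed
      then have "dist x0 z < e" using y by (simp add: dist_real_def abs_minus_commute)
      then show "z \<in> D" using e by auto
    qed
    show ?thesis
    proof (cases "y \<le> x0")
      case True
      then have "{y..x0} \<subseteq> D" using sub by (simp add: min_def max_def)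
      then show ?thesis using Mf_const[of y x0 D] True by auto
    next
      case False
      then have "{x0..y} \<subseteq> D" using sub by (simp add: min_def max_def)
      then show ?thesis using Mf_const[of x0 y D] False by auto
    qed
  qed
  moreover have "e/2 > 0" using e by simp
  ultimately show ?thesis using that by blast
qed

context strip_setup begin

lemma PA_ev:
  assumes "x0 \<in> A"
  obtains d where "d > 0" "\<And>x t. t \<in> {u..v} \<Longrightarrow> \<bar>x - x0\<bar> < d \<Longrightarrow> t - u < d \<Longrightarrow> PA t x = Mf A x0"
proof -
  obtain eta where eta: "eta > 0" "\<And>y. \<bar>y - x0\<bar> < 2 * eta \<Longrightarrow> Mf A y = Mf A x0 \<and> y \<in> A"
    using loc_const[OF oA assms] by blast
  have main: "PA t x = Mf A x0" if "t \<in> {u..v}" "\<bar>x - x0\<bar> < eta/2" "t - u < eta/2" for x t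
  proof (cases "t \<le> u")
    case True
    have "\<bar>x - x0\<bar> < 2 * eta" using that eta(1) by linarith
    then have "Mf A x = Mf A x0" using eta(2) by blast
    then show ?thesis using True by (simp add: PA_def)
  next
    case False
    then have tu: "t - u > 0" by simp
    have "1 / (eta/2) \<le> 1 / (t - u)"
      by (rule divide_left_mono) (use tu that in auto)
    then have l: "2 / eta \<le> 1 / (t - u)" by simp
    have xl: "\<bar>x - x0\<bar> < eta" using that eta(1) by linarith
    have mfc: "\<And>y. \<bar>y - x0\<bar> < 2 * eta \<Longrightarrow> Mf A y = Mf A x0" using eta(2) by blast
    have "Reg (Mf A) (1 / (t - u)) x = Mf A x0"
      by (rule bnd.Reg_const[OF bnd_Mf mfc eta(1) l xl])
    then show ?thesis using False by (simp add: PA_def)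
  qed
  have "eta/2 > 0" using eta(1) by simp
  then show ?thesis using that main by blast
qed

lemma PB_ev:
  assumes "x0 \<in> B"
  obtains d where "d > 0" "\<And>x t. t \<in> {u..v} \<Longrightarrow> \<bar>x - x0\<bar> < d \<Longrightarrow> v - t < d \<Longrightarrow> PB t x = Mf B x0"
proof -
  obtain eta where eta: "eta > 0" "\<And>y. \<bar>y - x0\<bar> < 2 * eta \<Longrightarrow> Mf B y = Mf B x0 \<and> y \<in> B"
    using loc_const[OF oB assms] by blast
  have main: "PB t x = Mf B x0" if "t \<in> {u..v}" "\<bar>x - x0\<bar> < eta/2" "v - t < eta/2" for x t
  proof (cases "v \<le> t")
    case True
    have "\<bar>x - x0\<bar> < 2 * eta" using that eta(1) by linarith
    then have "Mf B x = Mf B x0" using eta(2) by blast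
    then show ?thesis using True by (simp add: PB_def)
  next
    case False
    then have tu: "v - t > 0" by simp
    have "1 / (eta/2) \<le> 1 / (v - t)"
      by (rule divide_left_mono) (use tu that in auto)
    then have l: "2 / eta \<le> 1 / (v - t)" by simp
    have xl: "\<bar>x - x0\<bar> < eta" using that eta(1) by linarith
    have mfc: "\<And>y. \<bar>y - x0\<bar> < 2 * eta \<Longrightarrow> Mf B y = Mf B x0" using eta(2) by blast
    have "Reg (Mf B) (1 / (v - t)) x = Mf B x0"
      by (rule bnd.Reg_const[OF bnd_Mf mfc eta(1) l xl])
    then show ?thesis using False by (simp add: PB_def)
  qed
  have "eta/2 > 0" using eta(1) by simp
  then show ?thesis using that main by blast
qed

lemma SS_snd: "p \<in> SS \<Longrightarrow> snd p \<in> {u..v}"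
  using uv by (auto simp: SS_def)

lemma H_cont_u:
  assumes "x0 \<in> A"
  shows "continuous (at (x0, u) within SS) (\<lambda>p. H (snd p) (fst p))"
proof -
  obtain d where d: "d > 0" "\<And>x t. t \<in> {u..v} \<Longrightarrow> \<bar>x - x0\<bar> < d \<Longrightarrow> t - u < d \<Longrightarrow> PA t x = Mf A x0"
    using PA_ev[OF assms] by blast
  define c where "c = Mf A x0"
  define f1 where "f1 p = psi (fst p) + al (snd p) * c + w (snd p) * fst p" for p :: "real \<times> real"
  define f2 where "f2 p = be (snd p) * PB (snd p) (fst p)" for p :: "real \<times> real"
  have cf1: "continuous_on UNIV f1"
    unfolding f1_def al_def w_def
    by (intro continuous_intros continuous_on_compose2[OF psi_cont]) (use uv in auto)
  then have "(f1 \<longlongrightarrow> f1 (x0, u)) (at (x0, u) within SS)"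
    by (meson UNIV_I continuous_on_def tendsto_within_subset subset_UNIV)
  moreover have "f1 (x0, u) = H u x0" by (simp add: f1_def H_u al_u w_u c_def)
  ultimately have t1: "(f1 \<longlongrightarrow> H u x0) (at (x0, u) within SS)" by simp
  have cbe: "((\<lambda>p. \<bar>be (snd p)\<bar>) \<longlongrightarrow> \<bar>be (snd (x0, u))\<bar>) (at (x0, u) within SS)"
    unfolding be_def by (intro tendsto_intros) (use uv in auto)
  have "(f2 \<longlongrightarrow> 0) (at (x0, u) within SS)"
  proof (rule Lim_null_comparison)
    show "\<forall>\<^sub>F p in at (x0, u) within SS. norm (f2 p) \<le> \<bar>be (snd p)\<bar>"
    proof (intro always_eventually allI)
      fix p :: "real \<times> real"
      have "\<bar>PB (snd p) (fst p)\<bar> \<le> 1" using PB_bnd[of "snd p" "fst p"] by (simp add: abs_le_iff)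
      then have "\<bar>be (snd p)\<bar> * \<bar>PB (snd p) (fst p)\<bar> \<le> \<bar>be (snd p)\<bar>" by (simp add: mult_left_le)
      then show "norm (f2 p) \<le> \<bar>be (snd p)\<bar>" by (simp add: f2_def abs_mult)
    qed
    show "((\<lambda>p. \<bar>be (snd p)\<bar>) \<longlongrightarrow> 0) (at (x0, u) within SS)" using cbe by (simp add: be_u)
  qed
  then have t12: "((\<lambda>p. f1 p + f2 p) \<longlongrightarrow> H u x0) (at (x0, u) within SS)"
    using tendsto_add[OF t1] by fastforce
  have ev: "\<forall>\<^sub>F p in at (x0, u) within SS. f1 p + f2 p = H (snd p) (fst p)"
    unfolding eventually_at
  proof (intro exI[of _ d] conjI ballI impI d)
    fix p assume p: "p \<in> SS" "p \<noteq> (x0, u) \<and> dist p (x0, u) < d"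
    have "\<bar>fst p - x0\<bar> < d" using dist_fst_le[of p "(x0,u)"] p by (auto simp: dist_real_def)
    moreover have "\<bar>snd p - u\<bar> < d" using dist_snd_le[of p "(x0,u)"] p by (auto simp: dist_real_def)
    ultimately have "PA (snd p) (fst p) = c" using d SS_snd[OF p(1)] by (auto simp: c_def)
    then show "f1 p + f2 p = H (snd p) (fst p)" by (simp add: f1_def f2_def H_def)
  qed
  show ?thesis unfolding continuous_within using Lim_transform_eventually[OF t12 ev] by simp
qed

lemma H_cont_v:
  assumes "x0 \<in> B"
  shows "continuous (at (x0, v) within SS) (\<lambda>p. H (snd p) (fst p))"
proof -
  obtain d where d: "d > 0" "\<And>x t. t \<in> {u..v} \<Longrightarrow> \<bar>x - x0\<bar> < d \<Longrightarrow> v - t < d \<Longrightarrow> PB t x = Mf B x0"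
    using PB_ev[OF assms] by blast
  define c where "c = Mf B x0"
  define f1 where "f1 p = psi (fst p) + be (snd p) * c + w (snd p) * fst p" for p :: "real \<times> real"
  define f2 where "f2 p = al (snd p) * PA (snd p) (fst p)" for p :: "real \<times> real"
  have cf1: "continuous_on UNIV f1"
    unfolding f1_def be_def w_def
    by (intro continuous_intros continuous_on_compose2[OF psi_cont]) (use uv in auto)
  then have "(f1 \<longlongrightarrow> f1 (x0, v)) (at (x0, v) within SS)"
    by (meson UNIV_I continuous_on_def tendsto_within_subset subset_UNIV)
  moreover have "f1 (x0, v) = H v x0" by (simp add: f1_def H_v be_v w_v c_def)
  ultimately have t1: "(f1 \<longlongrightarrow> H v x0) (at (x0, v) within SS)" by simp
  have cbe: "((\<lambda>p. \<bar>al (snd p)\<bar>) \<longlongrightarrow> \<bar>al (snd (x0, v))\<bar>) (at (x0, v) within SS)"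
    unfolding al_def by (intro tendsto_intros) (use uv in auto)
  have "(f2 \<longlongrightarrow> 0) (at (x0, v) within SS)"
  proof (rule Lim_null_comparison)
    show "\<forall>\<^sub>F p in at (x0, v) within SS. norm (f2 p) \<le> \<bar>al (snd p)\<bar>"
    proof (intro always_eventually allI)
      fix p :: "real \<times> real"
      have "\<bar>PA (snd p) (fst p)\<bar> \<le> 1" using PA_bnd[of "snd p" "fst p"] by (simp add: abs_le_iff)
      then have "\<bar>al (snd p)\<bar> * \<bar>PA (snd p) (fst p)\<bar> \<le> \<bar>al (snd p)\<bar>" by (simp add: mult_left_le)
      then show "norm (f2 p) \<le> \<bar>al (snd p)\<bar>" by (simp add: f2_def abs_mult)
    qed
    show "((\<lambda>p. \<bar>al (snd p)\<bar>) \<longlongrightarrow> 0) (at (x0, v) within SS)" using cbe by (simp add: al_v)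
  qed
  then have t12: "((\<lambda>p. f1 p + f2 p) \<longlongrightarrow> H v x0) (at (x0, v) within SS)"
    using tendsto_add[OF t1] by fastforce
  have ev: "\<forall>\<^sub>F p in at (x0, v) within SS. f1 p + f2 p = H (snd p) (fst p)"
    unfolding eventually_at
  proof (intro exI[of _ d] conjI ballI impI d)
    fix p assume p: "p \<in> SS" "p \<noteq> (x0, v) \<and> dist p (x0, v) < d"
    have "\<bar>fst p - x0\<bar> < d" using dist_fst_le[of p "(x0,v)"] p by (auto simp: dist_real_def)
    moreover have "\<bar>snd p - v\<bar> < d" using dist_snd_le[of p "(x0,v)"] p by (auto simp: dist_real_def)
    ultimately have "PB (snd p) (fst p) = c" using d SS_snd[OF p(1)] by (auto simp: c_def)
    then show "f1 p + f2 p = H (snd p) (fst p)" by (simp add: f1_def f2_def H_def algebra_simps)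
  qed
  show ?thesis unfolding continuous_within using Lim_transform_eventually[OF t12 ev] by simp
qed

lemma H_cont: "continuous_on SS (\<lambda>p. H (snd p) (fst p))"
proof (rule continuous_on_eq_continuous_within[THEN iffD2], rule ballI)
  fix p assume p: "p \<in> SS"
  obtain x t where pe: "p = (x, t)" by (cases p)
  consider "t \<in> {u<..<v}" | "x \<in> A" "t = u" | "x \<in> B" "t = v" using p pe by (auto simp: SS_def)
  then show "continuous (at p within SS) (\<lambda>p. H (snd p) (fst p))"
  proof cases
    case 1
    have "open (UNIV \<times> {u<..<v} :: (real \<times> real) set)" by (intro open_Times) auto
    then have "continuous (at p) (\<lambda>p. H (snd p) (fst p))"
      using H_cont_int continuous_on_eq_continuous_at 1 pe by blast
    then show ?thesis by (rule continuous_at_imp_continuous_at_within)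
  next
    case 2 then show ?thesis using H_cont_u pe by simp
  next
    case 3 then show ?thesis using H_cont_v pe by simp
  qed
qed

lemma hh_cont: "continuous_on SS hh"
  unfolding hh_def by (intro continuous_on_Pair H_cont continuous_intros)

end


context strip_setup begin

lemma hh_inj: "inj_on hh SS"
proof (rule inj_onI)
  fix p q assume pq: "p \<in> SS" "q \<in> SS" "hh p = hh q"
  then have t: "snd p = snd q" and e: "H (snd p) (fst p) = H (snd p) (fst q)" by (auto simp: hh_def)
  have "fst p = fst q"
  proof (rule ccontr)
    assume "fst p \<noteq> fst q"
    then consider "fst p < fst q" | "fst q < fst p" by linarith
    then show False using H_strict[OF SS_snd[OF pq(1)]] e by cases fastforce+
  qed
  then show "p = q" using t by (simp add: prod_eq_iff)
qed

lemma nbhd: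
  assumes "(x0, t0) \<in> SS"
  obtains eta r where "eta > 0" "r > 0"
    "\<And>x t. \<bar>x - x0\<bar> \<le> eta \<Longrightarrow> t \<in> {u..v} \<Longrightarrow> \<bar>t - t0\<bar> < r \<Longrightarrow> (x, t) \<in> SS"
proof -
  consider "t0 \<in> {u<..<v}" | "x0 \<in> A" "t0 = u" | "x0 \<in> B" "t0 = v" using assms by (auto simp: SS_def)
  then show ?thesis
  proof cases
    case 1
    show ?thesis
    proof (rule that[of 1 "min (t0 - u) (v - t0)"])
      show "0 < min (t0 - u) (v - t0)" using 1 by auto
      fix x t assume "\<bar>t - t0\<bar> < min (t0 - u) (v - t0)"
      then show "(x, t) \<in> SS" by (auto simp: SS_def abs_less_iff)
    qed simp
  next
    case 2
    obtain e where e: "e > 0" "ball x0 e \<subseteq> A" using oA 2 by (meson openE)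
    show ?thesis
    proof (rule that[of "e/2" "v - u"])
      fix x t assume xt: "\<bar>x - x0\<bar> \<le> e / 2" "t \<in> {u..v}" "\<bar>t - t0\<bar> < v - u"
      have "x \<in> A" using xt e by (auto simp: dist_real_def abs_minus_commute)
      then show "(x, t) \<in> SS" using xt 2 by (cases "t = u") (auto simp: SS_def abs_less_iff)
    qed (use e uv in auto)
  next
    case 3
    obtain e where e: "e > 0" "ball x0 e \<subseteq> B" using oB 3 by (meson openE)
    show ?thesis
    proof (rule that[of "e/2" "v - u"])
      fix x t assume xt: "\<bar>x - x0\<bar> \<le> e / 2" "t \<in> {u..v}" "\<bar>t - t0\<bar> < v - u"
      have "x \<in> B" using xt e by (auto simp: dist_real_def abs_minus_commute)
      then show "(x, t) \<in> SS" using xt 3 by (cases "t = v") (auto simp: SS_def abs_less_iff)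
    qed (use e uv in auto)
  qed
qed

definition "gg = inv_into SS hh"

lemma gg_cont: "continuous_on (hh ` SS) gg"
  unfolding continuous_on_iff
proof (intro ballI allI impI)
  fix q0 e assume q0: "q0 \<in> hh ` SS" and e: "(0::real) < e"
  obtain x0 t0 where p0: "(x0, t0) \<in> SS" "q0 = hh (x0, t0)" using q0 by auto
  have t0: "t0 \<in> {u..v}" using SS_snd[OF p0(1)] by simp
  obtain eta r where er: "eta > 0" "r > 0"
    "\<And>x t. \<bar>x - x0\<bar> \<le> eta \<Longrightarrow> t \<in> {u..v} \<Longrightarrow> \<bar>t - t0\<bar> < r \<Longrightarrow> (x, t) \<in> SS"
    using nbhd[OF p0(1)] by blast
  define e' where "e' = min eta (e/4)"
  have e': "e' > 0" "e' \<le> eta" "e' \<le> e/4" using er e by (auto simp: e'_def)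
  define F where "F p = H (snd p) (fst p)" for p
  have Fc: "continuous_on SS F" unfolding F_def by (rule H_cont)
  define ym where "ym = H t0 (x0 - e')"
  define y0 where "y0 = H t0 x0"
  define yp where "yp = H t0 (x0 + e')"
  define m where "m = min (y0 - ym) (yp - y0)"
  have m: "m > 0" using H_strict[OF t0, of "x0 - e'" x0] H_strict[OF t0, of x0 "x0 + e'"] e'
    by (auto simp: m_def ym_def y0_def yp_def)
  have mle: "m \<le> y0 - ym" "m \<le> yp - y0" by (auto simp: m_def)
  have inm: "(x0 - e', t0) \<in> SS" "(x0 + e', t0) \<in> SS" using er(3)[OF _ t0] er e' by auto
  obtain d1 where d1: "d1 > 0" "\<And>p. p \<in> SS \<Longrightarrow> dist p (x0 - e', t0) < d1 \<Longrightarrow> dist (F p) (F (x0 - e', t0)) < m/2"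
    using Fc inm(1) m unfolding continuous_on_iff by (metis half_gt_zero)
  obtain d2 where d2: "d2 > 0" "\<And>p. p \<in> SS \<Longrightarrow> dist p (x0 + e', t0) < d2 \<Longrightarrow> dist (F p) (F (x0 + e', t0)) < m/2"
    using Fc inm(2) m unfolding continuous_on_iff by (metis half_gt_zero)
  define d where "d = min (min d1 d2) (min r (min (m/2) (e/2)))"
  have d: "d > 0" using d1 d2 er m e by (simp add: d_def)
  show "\<exists>d>0. \<forall>q\<in>hh ` SS. dist q q0 < d \<longrightarrow> dist (gg q) (gg q0) < e"
  proof (intro exI[of _ d] conjI ballI impI d)
    fix q assume q: "q \<in> hh ` SS" "dist q q0 < d"
    obtain x t where p: "(x, t) \<in> SS" "q = hh (x, t)" using q by auto
    have t: "t \<in> {u..v}" using SS_snd[OF p(1)] by simp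
    have ggq: "gg q = (x, t)" "gg q0 = (x0, t0)" using p p0 hh_inj by (auto simp: gg_def)
    have dt: "\<bar>t - t0\<bar> < d" using dist_snd_le[of q q0] q p p0 by (auto simp: hh_def dist_real_def)
    have dy: "\<bar>H t x - y0\<bar> < d" using dist_fst_le[of q q0] q p p0 by (auto simp: hh_def dist_real_def y0_def)
    have in1: "(x0 - e', t) \<in> SS" "(x0 + e', t) \<in> SS" using er(3)[OF _ t] dt e' by (auto simp: d_def)
    have "dist (x0 - e', t) (x0 - e', t0) < d1" using dt by (simp add: dist_Pair_Pair dist_real_def d_def)
    then have "\<bar>H t (x0 - e') - ym\<bar> < m/2" using d1(2)[OF in1(1)] by (simp add: F_def ym_def dist_real_def)
    moreover have "\<bar>H t x - y0\<bar> < m/2" using dy by (simp add: d_def)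
    ultimately have "H t (x0 - e') < H t x" using mle unfolding abs_less_iff by linarith
    then have l: "x0 - e' < x"
    proof (rule contrapos_pp)
      assume "\<not> x0 - e' < x"
      then have "x \<le> x0 - e'" by simp
      then have "H t x \<le> H t (x0 - e')" using H_strict[OF t, of x "x0 - e'"] by (cases "x = x0 - e'") auto
      then show "\<not> H t (x0 - e') < H t x" by simp
    qed
    have "dist (x0 + e', t) (x0 + e', t0) < d2" using dt by (simp add: dist_Pair_Pair dist_real_def d_def)
    then have "\<bar>H t (x0 + e') - yp\<bar> < m/2" using d2(2)[OF in1(2)] by (simp add: F_def yp_def dist_real_def)
    moreover have "\<bar>H t x - y0\<bar> < m/2" using dy by (simp add: d_def)
    ultimately have "H t x < H t (x0 + e')" using mle unfolding abs_less_iff by linarith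
    then have r: "x < x0 + e'"
    proof (rule contrapos_pp)
      assume "\<not> x < x0 + e'"
      then have "x0 + e' \<le> x" by simp
      then have "H t (x0 + e') \<le> H t x" using H_strict[OF t, of "x0 + e'" x] by (cases "x = x0 + e'") auto
      then show "\<not> H t x < H t (x0 + e')" by simp
    qed
    have "\<bar>x - x0\<bar> < e/2" using l r e' unfolding abs_less_iff by linarith
    moreover have "\<bar>t - t0\<bar> < e/2" using dt by (simp add: d_def)
    ultimately show "dist (gg q) (gg q0) < e" using ggq dist_pair_lt by simp
  qed
qed

lemma hh_homeo: "homeomorphism SS (hh ` SS) hh gg"
proof (rule homeomorphismI)
  show "continuous_on SS hh" by (rule hh_cont)
  show "continuous_on (hh ` SS) gg" by (rule gg_cont)
  show "hh ` SS \<subseteq> hh ` SS" by simp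
  show "gg ` hh ` SS \<subseteq> SS" using hh_inj by (auto simp: gg_def)
  show "\<And>x. x \<in> SS \<Longrightarrow> gg (hh x) = x" using hh_inj by (simp add: gg_def)
  show "\<And>y. y \<in> hh ` SS \<Longrightarrow> hh (gg y) = y" by (auto simp: gg_def f_inv_into_f)
qed

end


context strip_setup begin

lemma hh_snd[simp]: "snd (hh p) = snd p" by (simp add: hh_def)

lemma img_level: "hh ` (SS \<inter> (UNIV \<times> T)) = hh ` SS \<inter> (UNIV \<times> T)"
  by (auto simp: hh_def mem_Times_iff)

lemma leaf_img: assumes "u < t" "t < v" shows "hh ` (UNIV \<times> {t}) = UNIV \<times> {t}"
proof
  show "hh ` (UNIV \<times> {t}) \<subseteq> UNIV \<times> {t}" by (auto simp: hh_def)
  show "UNIV \<times> {t} \<subseteq> hh ` (UNIV \<times> {t})"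
  proof
    fix q :: "real \<times> real" assume "q \<in> UNIV \<times> {t}"
    then obtain y where q: "q = (y, t)" by auto
    obtain x where "H t x = y" using H_surj[OF assms] by blast
    then have "q = hh (x, t)" by (simp add: hh_def q)
    moreover have "(x, t) \<in> UNIV \<times> {t}" by simp
    ultimately show "q \<in> hh ` (UNIV \<times> {t})" by (rule image_eqI)
  qed
qed

lemma int_sub: "UNIV \<times> {u<..<v} \<subseteq> hh ` SS"
proof
  fix q :: "real \<times> real" assume q: "q \<in> UNIV \<times> {u<..<v}"
  obtain y t where yt: "q = (y, t)" by (cases q)
  have t: "u < t" "t < v" using q yt by auto
  obtain x where x: "H t x = y" using H_surj[OF t] by blast
  have "q = hh (x, t)" using x yt by (simp add: hh_def)
  moreover have "(x, t) \<in> SS" using t by (simp add: SS_def)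
  ultimately show "q \<in> hh ` SS" by (rule image_eqI)
qed

lemma img_sub: "hh ` SS \<subseteq> UNIV \<times> {u..v}"
proof
  fix q assume "q \<in> hh ` SS"
  then obtain p where "p \<in> SS" "q = hh p" by auto
  then have "snd q \<in> {u..v}" using SS_snd by simp
  then show "q \<in> UNIV \<times> {u..v}" by (simp add: mem_Times_iff)
qed

lemma bdry_open:
  assumes s: "s \<in> {u..v}" and Hs: "\<And>x. H s x = psi x + Mf D x" and oD: "open D"
    and DS: "\<And>x. x \<in> D \<Longrightarrow> (x, s) \<in> SS" and x0: "x0 \<in> D"
  shows "\<exists>e>0. \<forall>y. \<bar>y - H s x0\<bar> < e \<longrightarrow> (y, s) \<in> hh ` SS"
proof -
  obtain eta where eta: "eta > 0" "\<And>y. \<bar>y - x0\<bar> < 2 * eta \<Longrightarrow> Mf D y = Mf D x0 \<and> y \<in> D"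
    using loc_const[OF oD x0] by blast
  define ym where "ym = H s (x0 - eta)"
  define yp where "yp = H s (x0 + eta)"
  define y0 where "y0 = H s x0"
  have o: "ym < y0" "y0 < yp" using H_strict[OF s] eta(1) by (auto simp: ym_def y0_def yp_def)
  have cont: "continuous_on {x0 - eta..x0 + eta} (H s)"
  proof (rule continuous_on_eq[of _ "\<lambda>x. psi x + Mf D x0"])
    show "continuous_on {x0 - eta..x0 + eta} (\<lambda>x. psi x + Mf D x0)"
      by (intro continuous_intros psi_cont)
    fix x assume "x \<in> {x0 - eta..x0 + eta}"
    then have "\<bar>x - x0\<bar> < 2 * eta" using eta(1) by (auto simp: abs_le_iff)
    then have "Mf D x = Mf D x0" using eta(2) by blast
    then show "psi x + Mf D x0 = H s x" using Hs by simp
  qed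
  show ?thesis
  proof (intro exI[of _ "min (y0 - ym) (yp - y0)"] conjI allI impI)
    show "0 < min (y0 - ym) (yp - y0)" using o by simp
    fix y assume y: "\<bar>y - H s x0\<bar> < min (y0 - ym) (yp - y0)"
    then have "ym \<le> y" "y \<le> yp" unfolding y0_def[symmetric] abs_less_iff by linarith+
    then obtain x where x: "x0 - eta \<le> x" "x \<le> x0 + eta" "H s x = y"
      using IVT'[of "H s" "x0 - eta" y "x0 + eta"] cont eta(1) unfolding ym_def yp_def by auto
    have "\<bar>x - x0\<bar> < 2 * eta" using x eta(1) by (auto simp: abs_le_iff)
    then have "x \<in> D" using eta(2) by blast
    then have "(x, s) \<in> SS" using DS by blast
    moreover have "(y, s) = hh (x, s)" using x by (simp add: hh_def)
    ultimately show "(y, s) \<in> hh ` SS" by (metis image_eqI)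
  qed
qed

lemma img_openin: "openin (top_of_set (UNIV \<times> {u..v})) (hh ` SS)"
  unfolding openin_euclidean_subtopology_iff
proof (intro conjI img_sub ballI)
  fix q assume "q \<in> hh ` SS"
  then obtain x0 t0 where p0: "(x0, t0) \<in> SS" "q = hh (x0, t0)" by auto
  consider "t0 \<in> {u<..<v}" | "x0 \<in> A" "t0 = u" | "x0 \<in> B" "t0 = v" using p0 by (auto simp: SS_def)
  then show "\<exists>e>0. \<forall>x'\<in>UNIV \<times> {u..v}. dist x' q < e \<longrightarrow> x' \<in> hh ` SS"
  proof cases
    case 1
    show ?thesis
    proof (intro exI[of _ "min (t0 - u) (v - t0)"] conjI ballI impI)
      show "0 < min (t0 - u) (v - t0)" using 1 by auto
      fix x' :: "real \<times> real" assume "x' \<in> UNIV \<times> {u..v}" "dist x' q < min (t0 - u) (v - t0)"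
      then have "\<bar>snd x' - t0\<bar> < min (t0 - u) (v - t0)"
        using dist_snd_le[of x' q] p0 by (simp add: hh_def dist_real_def)
      then have "x' \<in> UNIV \<times> {u<..<v}" by (auto simp: mem_Times_iff abs_less_iff)
      then show "x' \<in> hh ` SS" using int_sub by blast
    qed
  next
    case 2
    obtain e where e: "e > 0" "\<And>y. \<bar>y - H u x0\<bar> < e \<Longrightarrow> (y, u) \<in> hh ` SS"
    proof -
      have DS: "\<And>x. x \<in> A \<Longrightarrow> (x, u) \<in> SS" by (simp add: SS_def)
      have "u \<in> {u..v}" using uv by simp
      from bdry_open[OF this H_u oA DS 2(1)] show ?thesis using that by blast
    qed
    show ?thesis
    proof (intro exI[of _ "min e (v - u)"] conjI ballI impI)
      show "0 < min e (v - u)" using e uv by auto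
      fix x' :: "real \<times> real" assume x': "x' \<in> UNIV \<times> {u..v}" "dist x' q < min e (v - u)"
      obtain y t where yt: "x' = (y, t)" by (cases x')
      have dt: "\<bar>t - u\<bar> < v - u" using dist_snd_le[of x' q] p0 x' yt 2 by (simp add: hh_def dist_real_def)
      have dy: "\<bar>y - H u x0\<bar> < e" using dist_fst_le[of x' q] p0 x' yt 2 by (simp add: hh_def dist_real_def)
      show "x' \<in> hh ` SS"
      proof (cases "t = u")
        case True then show ?thesis using e(2)[OF dy] yt by simp
      next
        case False
        then have "x' \<in> UNIV \<times> {u<..<v}" using x' yt dt by (auto simp: abs_less_iff)
        then show ?thesis using int_sub by blast
      qed
    qed
  next
    case 3
    obtain e where e: "e > 0" "\<And>y. \<bar>y - H v x0\<bar> < e \<Longrightarrow> (y, v) \<in> hh ` SS"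
    proof -
      have DS: "\<And>x. x \<in> B \<Longrightarrow> (x, v) \<in> SS" by (simp add: SS_def)
      have "v \<in> {u..v}" using uv by simp
      from bdry_open[OF this H_v oB DS 3(1)] show ?thesis using that by blast
    qed
    show ?thesis
    proof (intro exI[of _ "min e (v - u)"] conjI ballI impI)
      show "0 < min e (v - u)" using e uv by auto
      fix x' :: "real \<times> real" assume x': "x' \<in> UNIV \<times> {u..v}" "dist x' q < min e (v - u)"
      obtain y t where yt: "x' = (y, t)" by (cases x')
      have dt: "\<bar>t - v\<bar> < v - u" using dist_snd_le[of x' q] p0 x' yt 3 by (simp add: hh_def dist_real_def)
      have dy: "\<bar>y - H v x0\<bar> < e" using dist_fst_le[of x' q] p0 x' yt 3 by (simp add: hh_def dist_real_def)
      show "x' \<in> hh ` SS"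
      proof (cases "t = v")
        case True then show ?thesis using e(2)[OF dy] yt by simp
      next
        case False
        then have "x' \<in> UNIV \<times> {u<..<v}" using x' yt dt by (auto simp: abs_less_iff)
        then show ?thesis using int_sub by blast
      qed
    qed
  qed
qed

lemma img_strip: "is_strip u v (hh ` SS)"
  unfolding is_strip_def using uv int_sub img_sub img_openin by blast

end


lemma conn_between: "connected (X::real set) \<Longrightarrow> a \<in> X \<Longrightarrow> b \<in> X \<Longrightarrow> a \<le> z \<Longrightarrow> z \<le> b \<Longrightarrow> z \<in> X"
  by (meson connected_iff_interval)

lemma comp_level:
  fixes u v :: real
  assumes C: "C \<in> components K" and K: "K \<subseteq> UNIV \<times> {u, v}"
  shows "C \<subseteq> UNIV \<times> {u} \<or> C \<subseteq> UNIV \<times> {v}"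
proof (rule ccontr)
  assume "\<not> ?thesis"
  then obtain p p' where p: "p \<in> C" "snd p \<noteq> u" and p': "p' \<in> C" "snd p' \<noteq> v"
    by (auto simp: subset_iff mem_Times_iff)
  have CK: "C \<subseteq> K" using C by (rule in_components_subset)
  have sp: "snd p = v" using p CK K by (auto simp: mem_Times_iff)
  have sp': "snd p' = u" using p' CK K by (auto simp: mem_Times_iff)
  have uv: "u \<noteq> v" using sp p by simp
  have cs: "connected (snd ` C)"
    by (rule connected_continuous_image) (auto intro: continuous_intros in_components_connected[OF C])
  have "(u + v) / 2 \<in> snd ` C"
  proof (cases "u \<le> v")
    case True
    then show ?thesis using conn_between[OF cs, of "snd p'" "snd p" "(u+v)/2"] p p' sp sp' by auto
  next
    case False
    then show ?thesis using conn_between[OF cs, of "snd p" "snd p'" "(u+v)/2"] p p' sp sp' by auto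
  qed
  then obtain q where "q \<in> C" "snd q = (u + v) / 2" by auto
  then show False using CK K uv by (auto simp: mem_Times_iff)
qed

context strip_setup begin

definition "KK = strip_boundary u v SS"

lemma KK_eq: "KK = A \<times> {u} \<union> B \<times> {v}"
  using uv by (auto simp: KK_def strip_boundary_def lower_boundary_def upper_boundary_def SS_def)

lemma KK_sub: "KK \<subseteq> SS" by (auto simp: KK_def strip_boundary_def lower_boundary_def upper_boundary_def)

lemma KK_lv: "KK \<subseteq> UNIV \<times> {u, v}" by (auto simp: KK_eq)

lemma img_bdry: "strip_boundary u v (hh ` SS) = hh ` KK"
proof -
  have "strip_boundary u v (hh ` SS) = (hh ` SS \<inter> (UNIV \<times> {u})) \<union> (hh ` SS \<inter> (UNIV \<times> {v}))"
    by (simp add: strip_boundary_def lower_boundary_def upper_boundary_def)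
  also have "\<dots> = hh ` (SS \<inter> (UNIV \<times> {u})) \<union> hh ` (SS \<inter> (UNIV \<times> {v}))"
    by (simp add: img_level)
  also have "\<dots> = hh ` KK"
    by (simp add: KK_def strip_boundary_def lower_boundary_def upper_boundary_def image_Un)
  finally show ?thesis .
qed

lemma homK: "homeomorphism KK (hh ` KK) hh gg"
  by (rule homeomorphism_of_subsets[OF hh_homeo KK_sub _ refl]) (use KK_sub in auto)

lemma comp_img: "C \<in> components KK \<Longrightarrow> hh ` C \<in> components (hh ` KK)"
proof -
  assume "C \<in> components KK"
  then obtain x where x: "x \<in> KK" "C = connected_component_set KK x" by (rule componentsE)
  then have "hh ` C = connected_component_set (hh ` KK) (hh x)"
    using connected_component_set_homeomorphism[OF homK x(1)] by simp
  then show ?thesis using componentsI[of "hh x" "hh ` KK"] x(1) by simp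
qed

lemma comp_pre: "C' \<in> components (hh ` KK) \<Longrightarrow> \<exists>C \<in> components KK. C' = hh ` C"
proof -
  assume "C' \<in> components (hh ` KK)"
  then obtain y where y: "y \<in> hh ` KK" "C' = connected_component_set (hh ` KK) y" by (rule componentsE)
  then obtain x where x: "x \<in> KK" "y = hh x" by auto
  then have "C' = hh ` connected_component_set KK x"
    using connected_component_set_homeomorphism[OF homK x(1)] y by simp
  then show ?thesis using componentsI[of x KK] x(1) by blast
qed

lemma sep:
  assumes Hs: "\<And>x. H s x = psi x + Mf D x" and oD: "open D" and KD: "\<And>x. (x, s) \<in> KK \<longleftrightarrow> x \<in> D"
    and C1: "C1 \<in> components KK" and C2: "C2 \<in> components KK" and ne: "C1 \<noteq> C2"
    and l1: "C1 \<subseteq> UNIV \<times> {s}" and l2: "C2 \<subseteq> UNIV \<times> {s}"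
    and a: "(a, s) \<in> C1" and b: "(b, s) \<in> C2" and ab: "a < b"
  shows "closure (hh ` C1) \<inter> closure (hh ` C2) = {}"
proof -
  have C1K: "C1 \<subseteq> KK" using C1 by (rule in_components_subset)
  have C2K: "C2 \<subseteq> KK" using C2 by (rule in_components_subset)
  have aD: "a \<in> D" using a C1K KD by blast
  have bD: "b \<in> D" using b C2K KD by blast
  obtain p where p: "a < p" "p < b" "p \<notin> D"
  proof (rule ccontr)
    assume "\<not> thesis"
    then have allD: "\<And>p. a < p \<Longrightarrow> p < b \<Longrightarrow> p \<in> D" using that by blast
    have TK: "{a..b} \<times> {s} \<subseteq> KK"
    proof
      fix q assume "q \<in> {a..b} \<times> {s}"
      then obtain x where q: "q = (x, s)" "a \<le> x" "x \<le> b" by auto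
      have "x \<in> D" using allD aD bD q by (cases "x = a"; cases "x = b") auto
      then show "q \<in> KK" using KD q by simp
    qed
    have "connected ({a..b} \<times> {s})" by (intro connected_Times) auto
    moreover have "C1 \<inter> ({a..b} \<times> {s}) \<noteq> {}" using a ab by auto
    moreover have "C2 \<inter> ({a..b} \<times> {s}) \<noteq> {}" using b ab by auto
    ultimately have "C1 = C2" using joinable_components_eq[of "{a..b} \<times> {s}" KK C1 C2] TK C1 C2 by blast
    then show False using ne by simp
  qed
  have cf1: "connected (fst ` C1)"
    by (rule connected_continuous_image) (auto intro: continuous_intros in_components_connected[OF C1])
  have cf2: "connected (fst ` C2)"
    by (rule connected_continuous_image) (auto intro: continuous_intros in_components_connected[OF C2])
  have memC1: "(x, s) \<in> C1" if "x \<in> fst ` C1" for x using that l1 by (auto simp: mem_Times_iff)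
  have memC2: "(x, s) \<in> C2" if "x \<in> fst ` C2" for x using that l2 by (auto simp: mem_Times_iff)
  have fa: "a \<in> fst ` C1" using a by force
  have fb: "b \<in> fst ` C2" using b by force
  have inD1: "x \<in> D" if "x \<in> fst ` C1" for x using memC1[OF that] C1K KD by blast
  have inD2: "x \<in> D" if "x \<in> fst ` C2" for x using memC2[OF that] C2K KD by blast
  have lt1: "x < p" if "x \<in> fst ` C1" for x
  proof (rule ccontr)
    assume "\<not> x < p"
    then have "p \<in> fst ` C1" using conn_between[OF cf1 fa that, of p] p by simp
    then show False using inD1 p by blast
  qed
  have gt2: "p < x" if "x \<in> fst ` C2" for x
  proof (rule ccontr)
    assume "\<not> p < x"
    then have "p \<in> fst ` C2" using conn_between[OF cf2 that fb, of p] p by simp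
    then show False using inD2 p by blast
  qed
  have Mc: "Mf D x = Mf D a" if "x \<in> fst ` C1" for x
  proof (cases "x \<le> a")
    case True
    have "{x..a} \<subseteq> D" using conn_between[OF cf1 that fa] inD1 by auto
    then show ?thesis using Mf_const True by blast
  next
    case False
    have "{a..x} \<subseteq> D" using conn_between[OF cf1 fa that] inD1 by auto
    then show ?thesis using Mf_const False by (metis linorder_le_cases)
  qed
  define K1 where "K1 = psi p + Mf D a"
  have K1: "K1 < psi p + psi p"
    using Mf_lt[OF oD aD] psi_strict[OF p(1)] by (simp add: K1_def)
  have s1: "hh ` C1 \<subseteq> {q. fst q \<le> K1}"
  proof
    fix q assume "q \<in> hh ` C1"
    then obtain x where x: "(x, s) \<in> C1" "q = hh (x, s)" using l1 by (auto simp: mem_Times_iff)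
    have xf: "x \<in> fst ` C1" using x by force
    have "psi x \<le> psi p" using psi_strict lt1[OF xf] by (simp add: less_imp_le)
    then show "q \<in> {q. fst q \<le> K1}" using x Mc[OF xf] by (simp add: hh_def Hs K1_def)
  qed
  have s2: "hh ` C2 \<subseteq> {q. psi p + psi p \<le> fst q}"
  proof
    fix q assume "q \<in> hh ` C2"
    then obtain x where x: "(x, s) \<in> C2" "q = hh (x, s)" using l2 by (auto simp: mem_Times_iff)
    have xf: "x \<in> fst ` C2" using x by force
    have "psi p \<le> psi x" using psi_strict gt2[OF xf] by (simp add: less_imp_le)
    moreover have "psi p \<le> Mf D x" using Mf_ge[OF p(3) gt2[OF xf]] .
    ultimately show "q \<in> {q. psi p + psi p \<le> fst q}" using x by (simp add: hh_def Hs)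
  qed
  have "closed {q :: real \<times> real. fst q \<le> K1}" by (intro closed_Collect_le continuous_intros)
  then have c1: "closure (hh ` C1) \<subseteq> {q. fst q \<le> K1}" using s1 by (rule closure_minimal[rotated])
  have "closed {q :: real \<times> real. psi p + psi p \<le> fst q}" by (intro closed_Collect_le continuous_intros)
  then have c2: "closure (hh ` C2) \<subseteq> {q. psi p + psi p \<le> fst q}" using s2 by (rule closure_minimal[rotated])
  show ?thesis using c1 c2 K1 by fastforce
qed

end


context strip_setup begin

lemma KD_u: "(x, u) \<in> KK \<longleftrightarrow> x \<in> A" using uv by (auto simp: KK_eq)
lemma KD_v: "(x, v) \<in> KK \<longleftrightarrow> x \<in> B" using uv by (auto simp: KK_eq)

lemma sep_level:
  assumes Hs: "\<And>x. H s x = psi x + Mf D x" and oD: "open D" and KD: "\<And>x. (x, s) \<in> KK \<longleftrightarrow> x \<in> D"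
    and C1: "C1 \<in> components KK" and C2: "C2 \<in> components KK" and ne: "C1 \<noteq> C2"
    and l1: "C1 \<subseteq> UNIV \<times> {s}" and l2: "C2 \<subseteq> UNIV \<times> {s}"
  shows "closure (hh ` C1) \<inter> closure (hh ` C2) = {}"
proof -
  obtain q1 where q1: "q1 \<in> C1" using in_components_nonempty[OF C1] by blast
  obtain q2 where q2: "q2 \<in> C2" using in_components_nonempty[OF C2] by blast
  define a where "a = fst q1"
  define b where "b = fst q2"
  have a: "(a, s) \<in> C1" using q1 l1 by (auto simp: a_def mem_Times_iff)
  have b: "(b, s) \<in> C2" using q2 l2 by (auto simp: b_def mem_Times_iff)
  have "a \<noteq> b"
  proof
    assume "a = b"
    then have "C1 \<inter> C2 \<noteq> {}" using a b by blast
    then show False using components_eq[OF C1 C2] ne by blast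
  qed
  then consider "a < b" | "b < a" by linarith
  then show ?thesis
  proof cases
    case 1 then show ?thesis using sep[OF Hs oD KD C1 C2 ne l1 l2 a b] by blast
  next
    case 2 then show ?thesis using sep[OF Hs oD KD C2 C1 ne[symmetric] l2 l1 b a] by blast
  qed
qed

lemma model: "is_model_strip u v (hh ` SS)"
  unfolding is_model_strip_def boundary_intervals_def img_bdry
proof (intro conjI img_strip ballI impI)
  fix I assume I: "I \<in> components (hh ` KK)"
  have "hh ` KK \<subseteq> cbox (-2, u) (2, v)"
  proof
    fix q assume "q \<in> hh ` KK"
    then obtain x t where xt: "(x, t) \<in> KK" "q = hh (x, t)" by auto
    have "(x, t) \<in> A \<times> {u} \<union> B \<times> {v}" using xt(1) KK_eq by blast
    then consider "x \<in> A" "t = u" | "x \<in> B" "t = v" by blast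
    then have "\<bar>H t x\<bar> \<le> 2 \<and> t \<in> {u..v}"
    proof cases
      case 1
      have "H t x = psi x + Mf A x" using 1 H_u by simp
      moreover have "-1 < psi x" "psi x < 1" using psi_bound[of x] unfolding abs_less_iff by linarith+
      moreover have "-1 \<le> Mf A x" "Mf A x \<le> 1" by (rule Mf_ge1, rule Mf_le1)
      ultimately have "\<bar>H t x\<bar> \<le> 2" unfolding abs_le_iff by linarith
      moreover have "t \<in> {u..v}" using 1 uv by simp
      ultimately show ?thesis by blast
    next
      case 2
      have "H t x = psi x + Mf B x" using 2 H_v by simp
      moreover have "-1 < psi x" "psi x < 1" using psi_bound[of x] unfolding abs_less_iff by linarith+
      moreover have "-1 \<le> Mf B x" "Mf B x \<le> 1" by (rule Mf_ge1, rule Mf_le1)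
      ultimately have "\<bar>H t x\<bar> \<le> 2" unfolding abs_le_iff by linarith
      moreover have "t \<in> {u..v}" using 2 uv by simp
      ultimately show ?thesis by blast
    qed
    moreover have "q = (H t x, t)" using xt by (simp add: hh_def)
    ultimately show "q \<in> cbox (-2, u) (2, v)" by (simp add: cbox_interval abs_le_iff)
  qed
  then have "I \<subseteq> cbox (-2, u) (2, v)" using in_components_subset[OF I] by (rule order_trans[rotated])
  then show "bounded I" by (rule bounded_subset[OF bounded_cbox])
next
  fix I J assume I: "I \<in> components (hh ` KK)" and J: "J \<in> components (hh ` KK)" and ne: "I \<noteq> J"
  obtain C1 where C1: "C1 \<in> components KK" "I = hh ` C1" using comp_pre[OF I] by blast
  obtain C2 where C2: "C2 \<in> components KK" "J = hh ` C2" using comp_pre[OF J] by blast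
  have ne': "C1 \<noteq> C2" using ne C1 C2 by blast
  have lu: "closure (hh ` C) \<subseteq> UNIV \<times> {s}" if "C \<subseteq> UNIV \<times> {s}" for C s
  proof (rule closure_minimal)
    show "hh ` C \<subseteq> UNIV \<times> {s}" using that by (auto simp: hh_def mem_Times_iff)
    show "closed (UNIV \<times> {s} :: (real \<times> real) set)" by (intro closed_Times) auto
  qed
  from comp_level[OF C1(1) KK_lv] comp_level[OF C2(1) KK_lv]
  show "closure I \<inter> closure J = {}"
  proof (elim disjE)
    assume "C1 \<subseteq> UNIV \<times> {u}" "C2 \<subseteq> UNIV \<times> {u}"
    then show ?thesis using sep_level[OF H_u oA KD_u C1(1) C2(1) ne'] C1 C2 by simp
  next
    assume "C1 \<subseteq> UNIV \<times> {v}" "C2 \<subseteq> UNIV \<times> {v}"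
    then show ?thesis using sep_level[OF H_v oB KD_v C1(1) C2(1) ne'] C1 C2 by simp
  next
    assume "C1 \<subseteq> UNIV \<times> {u}" "C2 \<subseteq> UNIV \<times> {v}"
    then have "closure I \<subseteq> UNIV \<times> {u}" "closure J \<subseteq> UNIV \<times> {v}" using lu C1 C2 by auto
    then show ?thesis using uv by (force simp: mem_Times_iff)
  next
    assume "C1 \<subseteq> UNIV \<times> {v}" "C2 \<subseteq> UNIV \<times> {u}"
    then have "closure I \<subseteq> UNIV \<times> {v}" "closure J \<subseteq> UNIV \<times> {u}" using lu C1 C2 by auto
    then show ?thesis using uv by (force simp: mem_Times_iff)
  qed
qed

lemma foliated: "foliated_homeomorphism (canonical_leaves u v SS) (canonical_leaves u v (hh ` SS)) SS (hh ` SS) hh"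
  unfolding foliated_homeomorphism_def
proof (intro conjI exI[of _ gg] hh_homeo ballI)
  fix L assume "L \<in> canonical_leaves u v SS"
  then consider t where "L = UNIV \<times> {t}" "u < t" "t < v" | "L \<in> components KK"
    by (auto simp: canonical_leaves_def boundary_intervals_def KK_def)
  then show "hh ` L \<in> canonical_leaves u v (hh ` SS)"
  proof cases
    case 1 then show ?thesis using leaf_img[OF 1(2,3)] by (auto simp: canonical_leaves_def)
  next
    case 2 then show ?thesis using comp_img[OF 2]
      by (simp add: canonical_leaves_def boundary_intervals_def img_bdry)
  qed
qed

end

theorem mainTheorem1:
  fixes S :: "(real \<times> real) set" and u v :: real
  assumes "is_strip u v S"
  shows "\<exists>u' v' S' h. is_model_strip u' v' S'
           \<and> foliated_homeomorphism (canonical_leaves u v S) (canonical_leaves u' v' S') S S' h"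
proof -
  have uv: "u < v" and inS: "UNIV \<times> {u<..<v} \<subseteq> S" and Ssub: "S \<subseteq> UNIV \<times> {u..v}"
    and op: "openin (top_of_set (UNIV \<times> {u..v})) S"
    using assms by (auto simp: is_strip_def)
  obtain T where T: "open T" "S = (UNIV \<times> {u..v}) \<inter> T" using op by (auto simp: openin_open)
  define A where "A = {x. (x, u) \<in> S}"
  define B where "B = {x. (x, v) \<in> S}"
  have "A = (\<lambda>x. (x, u)) -` T" using T uv by (auto simp: A_def)
  then have oA: "open A" using T(1) by (auto intro!: continuous_open_vimage continuous_intros)
  have "B = (\<lambda>x. (x, v)) -` T" using T uv by (auto simp: B_def)
  then have oB: "open B" using T(1) by (auto intro!: continuous_open_vimage continuous_intros)
  interpret strip_setup u v A B using uv oA oB by unfold_locales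
  have memA: "\<And>x. x \<in> A \<longleftrightarrow> (x, u) \<in> S" by (simp add: A_def)
  have memB: "\<And>x. x \<in> B \<longleftrightarrow> (x, v) \<in> S" by (simp add: B_def)
  have SSeq: "S = SS"
  proof (intro set_eqI iffI)
    fix p assume p: "p \<in> S"
    obtain x t where xt: "p = (x, t)" by (cases p)
    have "t \<in> {u..v}" using p Ssub xt by auto
    then consider "t \<in> {u<..<v}" | "t = u" | "t = v" by fastforce
    then show "p \<in> SS"
    proof cases
      case 1 then show ?thesis unfolding SS_def xt by blast
    next
      case 2 then have "x \<in> A" using memA p xt by blast
      then show ?thesis unfolding SS_def xt 2 by blast
    next
      case 3 then have "x \<in> B" using memB p xt by blast
      then show ?thesis unfolding SS_def xt 3 by blast
    qed
  next
    fix p assume p: "p \<in> SS"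
    then consider "p \<in> UNIV \<times> {u<..<v}" | "p \<in> A \<times> {u}" | "p \<in> B \<times> {v}" unfolding SS_def by blast
    then show "p \<in> S"
    proof cases
      case 1 then show ?thesis using inS by blast
    next
      case 2 then show ?thesis using memA by (auto simp: mem_Times_iff)
    next
      case 3 then show ?thesis using memB by (auto simp: mem_Times_iff)
    qed
  qed
  show ?thesis using model foliated SSeq by blast
qed


end
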